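(* Let $p,q$ be positive integers with $p/q\ge 2$, let $G$ be a connected graph with a fixed orientation $\overrightarrow{G}$, and let $\varphi,\psi$ be two $(p,q)$-labellings of $G$. Then $\varphi$ can be transformed into $\psi$ through a finite sequence of edge cut relabellings if and only if $\varphi(C)=\psi(C)$ for every cycle $C$ of $G$.
   Context: Fix an orientation $\overrightarrow{G}$ of $G$. For an edge-labelling $\varphi:E(G)\to\{0,1,\dots,p-1\}$ and a cycle $C$ with a chosen direction of traversal, let $C^+$ be the edges of $C$ whose orientation agrees with the traversal and $C^-$ the others, and define $\varphi(C)=\sum_{e\in C^+}\varphi(e)+\sum_{e\in C^-}(p-\varphi(e))$, the sum taken in $\mathbb{Z}$. A $(p,q)$-labelling is an edge-labelling $\varphi:E(G)\to\{0,\dots,p-1\}$ such that (P1) $q\le\varphi(e)\le p-q$ for every edge $e$, and (P2) $\varphi(C)\equiv 0\pmod p$ for every cycle $C$. For $\emptyset\ne X\subsetneq V(G)$, let $\partial^+(X)$ (resp. $\partial^-(X)$) be the set of arcs of $\overrightarrow{G}$ from $X$ to $V(G)\setminus X$ (resp. from $V(G)\setminus X$ to $X$). Given a $(p,q)$-labelling $\varphi$ and an integer $1\le\alpha\le p-1$ such that $\varphi(e)\ge q+\alpha$ for all $e\in\partial^+(X)$ and $\varphi(e)\le p-q-\alpha$ for all $e\in\partial^-(X)$, the edge cut relabelling of $\varphi$ on $\partial(X)$ by $\alpha$ is the labelling $\varphi'$ with $\varphi'(e)=\varphi(e)-\alpha$ for $e\in\partial^+(X)$, $\varphi'(e)=\varphi(e)+\alpha$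 for $e\in\partial^-(X)$, and $\varphi'(e)=\varphi(e)$ otherwise. *)

theory Defs
  imports Complex_Main
begin

definition oriented_graph :: "'v set \<Rightarrow> ('v \<times> 'v) set \<Rightarrow> bool" where
  "oriented_graph V E \<longleftrightarrow> finite V \<and> E \<subseteq> V \<times> V \<and> (\<forall>v. (v, v) \<notin> E)
     \<and> (\<forall>u v. (u, v) \<in> E \<longrightarrow> (v, u) \<notin> E)"

definition connected_graph :: "'v set \<Rightarrow> ('v \<times> 'v) set \<Rightarrow> bool" where
  "connected_graph V E \<longleftrightarrow> (\<forall>u\<in>V. \<forall>v\<in>V. (u, v) \<in> (E \<union> E\<inverse>)\<^sup>*)"

definition is_cycle :: "'v set \<Rightarrow> ('v \<times> 'v) set \<Rightarrow> 'v list \<Rightarrow> bool" where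
  "is_cycle V E vs \<longleftrightarrow> length vs \<ge> 3 \<and> distinct vs \<and> set vs \<subseteq> V \<and>
     (\<forall>i < length vs. (vs ! i, vs ! ((i + 1) mod length vs)) \<in> E \<union> E\<inverse>)"

definition cycle_value :: "('v \<times> 'v) set \<Rightarrow> int \<Rightarrow> ('v \<times> 'v \<Rightarrow> int) \<Rightarrow> 'v list \<Rightarrow> int" where
  "cycle_value E p \<phi> vs =
     (\<Sum>i < length vs.
        let u = vs ! i; w = vs ! ((i + 1) mod length vs) in
        if (u, w) \<in> E then \<phi> (u, w) else p - \<phi> (w, u))"

definition pq_labelling :: "'v set \<Rightarrow> ('v \<times> 'v) set \<Rightarrow> int \<Rightarrow> int \<Rightarrow> ('v \<times> 'v \<Rightarrow> int) \<Rightarrow> bool" where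
  "pq_labelling V E p q \<phi> \<longleftrightarrow>
     (\<forall>e\<in>E. 0 \<le> \<phi> e \<and> \<phi> e \<le> p - 1) \<and>
     (\<forall>e\<in>E. q \<le> \<phi> e \<and> \<phi> e \<le> p - q) \<and>
     (\<forall>vs. is_cycle V E vs \<longrightarrow> cycle_value E p \<phi> vs mod p = 0)"

definition out_cut :: "'v set \<Rightarrow> ('v \<times> 'v) set \<Rightarrow> 'v set \<Rightarrow> ('v \<times> 'v) set" where
  "out_cut V E X = {(u, v) \<in> E. u \<in> X \<and> v \<in> V - X}"

definition in_cut :: "'v set \<Rightarrow> ('v \<times> 'v) set \<Rightarrow> 'v set \<Rightarrow> ('v \<times> 'v) set" where
  "in_cut V E X = {(u, v) \<in> E. u \<in> V - X \<and> v \<in> X}"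

definition cut_relabel_step ::
  "'v set \<Rightarrow> ('v \<times> 'v) set \<Rightarrow> int \<Rightarrow> int \<Rightarrow> ('v \<times> 'v \<Rightarrow> int) \<Rightarrow> ('v \<times> 'v \<Rightarrow> int) \<Rightarrow> bool" where
  "cut_relabel_step V E p q \<phi> \<phi>' \<longleftrightarrow> pq_labelling V E p q \<phi> \<and>
     (\<exists>X \<alpha>. X \<noteq> {} \<and> X \<subset> V \<and> 1 \<le> \<alpha> \<and> \<alpha> \<le> p - 1 \<and>
        (\<forall>e\<in>out_cut V E X. \<phi> e \<ge> q + \<alpha>) \<and>
        (\<forall>e\<in>in_cut V E X. \<phi> e \<le> p - q - \<alpha>) \<and>
        (\<forall>e\<in>E. \<phi>' e = (if e \<in> out_cut V E X then \<phi> e - \<alpha>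
                         else if e \<in> in_cut V E X then \<phi> e + \<alpha> else \<phi> e)))"

definition cut_reachable ::
  "'v set \<Rightarrow> ('v \<times> 'v) set \<Rightarrow> int \<Rightarrow> int \<Rightarrow> ('v \<times> 'v \<Rightarrow> int) \<Rightarrow> ('v \<times> 'v \<Rightarrow> int) \<Rightarrow> bool" where
  "cut_reachable V E p q \<phi> \<psi> \<longleftrightarrow>
     (\<exists>\<chi>. (cut_relabel_step V E p q)\<^sup>*\<^sup>* \<phi> \<chi> \<and> (\<forall>e\<in>E. \<chi> e = \<psi> e))"

end

theory Submission
  imports Defs
begin

fun ws :: "('v \<Rightarrow> 'v \<Rightarrow> int) \<Rightarrow> 'v list \<Rightarrow> int" where
  "ws d (x # y # zs) = d x y + ws d (y # zs)"
| "ws d _ = 0"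

lemma ws_append: "ws d (xs @ y # ys) = ws d (xs @ [y]) + ws d (y # ys)"
proof (induction xs)
  case Nil then show ?case by simp
next
  case (Cons x xs) then show ?case by (cases xs) auto
qed

lemma ws_snoc: "xs \<noteq> [] \<Longrightarrow> ws d (xs @ [w]) = ws d xs + d (last xs) w"
proof (induction xs rule: induct_list012)
  case (3 x y zs) then show ?case by simp
qed auto

lemma ws_nth: "ws d xs = (\<Sum>i < length xs - 1. d (xs ! i) (xs ! Suc i))"
proof (induction d xs rule: ws.induct)
  case (1 d x y zs)
  then show ?case by (simp add: sum.lessThan_Suc_shift del: sum.lessThan_Suc)
qed auto

lemma ws_rev:
  assumes "\<And>x y. A x y \<Longrightarrow> d x y + d y x = 0"
  shows "successively A xs \<Longrightarrow> ws d (rev xs) = - ws d xs"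
proof (induction xs rule: induct_list012)
  case (3 x y zs)
  have "ws d (rev (x # y # zs)) = ws d (rev zs @ y # [x])" by simp
  also have "\<dots> = ws d (rev (y # zs)) + d y x" by (subst ws_append) simp
  finally show ?case using 3 assms[of x y] by simp
qed auto

lemma cyc_shift:
  "(\<Sum>i<n. h ((i + 1) mod n)) = (\<Sum>i<(n::nat). (h i :: int))"
proof (cases n)
  case (Suc m)
  have "(\<Sum>i<n. h ((i + 1) mod n)) = (\<Sum>i<m. h (Suc i)) + h 0"
    using Suc by (simp add: sum.lessThan_Suc)
  also have "\<dots> = (\<Sum>i<n. h i)" using Suc by (simp add: sum.lessThan_Suc_shift del: sum.lessThan_Suc)
  finally show ?thesis .
qed simp

lemma cv_pot:
  assumes adj: "\<forall>i<length vs. (vs!i, vs!((i+1) mod length vs)) \<in> E \<union> E\<inverse>"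
    and rel: "\<forall>u w. (u, w) \<in> E \<longrightarrow> \<phi>' (u, w) = \<phi> (u, w) + g u - g w"
  shows "cycle_value E p \<phi>' vs = cycle_value E p \<phi> vs"
proof -
  let ?n = "length vs"
  have "cycle_value E p \<phi>' vs = (\<Sum>i<?n. (let u = vs ! i; w = vs ! ((i + 1) mod ?n) in
        if (u, w) \<in> E then \<phi> (u, w) else p - \<phi> (w, u)) + (g (vs!i) - g (vs!((i+1) mod ?n))))"
    unfolding cycle_value_def
  proof (rule sum.cong[OF refl])
    fix i assume "i \<in> {..<?n}"
    then have "(vs!i, vs!((i+1) mod ?n)) \<in> E \<union> E\<inverse>" using adj by auto
    then show "(let u = vs ! i; w = vs ! ((i + 1) mod ?n) in
        if (u, w) \<in> E then \<phi>' (u, w) else p - \<phi>' (w, u)) = (let u = vs ! i; w = vs ! ((i + 1) mod ?n) in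
        if (u, w) \<in> E then \<phi> (u, w) else p - \<phi> (w, u)) + (g (vs!i) - g (vs!((i+1) mod ?n)))"
      using rel by (auto simp: Let_def)
  qed
  also have "\<dots> = cycle_value E p \<phi> vs + ((\<Sum>i<?n. g (vs!i)) - (\<Sum>i<?n. g (vs!((i+1) mod ?n))))"
    unfolding cycle_value_def by (simp add: sum.distrib sum_subtractf)
  also have "(\<Sum>i<?n. g (vs!((i+1) mod ?n))) = (\<Sum>i<?n. g (vs!i))"
    by (rule cyc_shift)
  finally show ?thesis by simp
qed


definition dd :: "('v \<times> 'v) set \<Rightarrow> ('v \<times> 'v \<Rightarrow> int) \<Rightarrow> ('v \<times> 'v \<Rightarrow> int) \<Rightarrow> 'v \<Rightarrow> 'v \<Rightarrow> int" where
  "dd E \<phi> \<psi> u w = (if (u, w) \<in> E then \<phi> (u, w) - \<psi> (u, w) else \<psi> (w, u) - \<phi> (w, u))"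

lemma dd_anti:
  assumes "oriented_graph V E" "(x, y) \<in> E \<union> E\<inverse>"
  shows "dd E \<phi> \<psi> x y + dd E \<phi> \<psi> y x = 0"
  using assms unfolding oriented_graph_def dd_def by auto

lemma succ_glue:
  assumes "successively P (xs @ [v])" "successively P (v # ys)"
  shows "successively P (xs @ v # ys)"
  using assms by (cases "xs = []") (auto simp: successively_append_iff)

lemma succ_split:
  assumes "successively P (xs @ v # ys)"
  shows "successively P (xs @ [v])" "successively P (v # ys)"
  using assms by (auto simp: successively_append_iff)

lemma closed_walk_zero:
  assumes og: "oriented_graph V E"
    and cyc: "\<forall>vs. is_cycle V E vs \<longrightarrow> cycle_value E p \<phi> vs = cycle_value E p \<psi> vs"
  shows "successively (\<lambda>x y. (x, y) \<in> E \<union> E\<inverse>) xs \<Longrightarrow> xs \<noteq> [] \<Longrightarrow> hd xs = last xs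
         \<Longrightarrow> ws (dd E \<phi> \<psi>) xs = 0"
proof (induction "length xs" arbitrary: xs rule: less_induct)
  case less
  let ?A = "\<lambda>x y. (x, y) \<in> E \<union> E\<inverse>"
  let ?d = "dd E \<phi> \<psi>"
  have EV: "E \<subseteq> V \<times> V" and nl: "\<And>v. (v, v) \<notin> E" using og unfolding oriented_graph_def by auto
  define cs where "cs = butlast xs"
  define l where "l = last xs"
  have xs_eq: "xs = cs @ [l]" using less.prems(2) unfolding cs_def l_def by simp
  show ?case
  proof (cases "distinct cs")
    case dist: True
    consider "length cs = 0" | "length cs = 1" | "length cs = 2" | "length cs \<ge> 3" by linarith
    then show ?thesis
    proof cases
      case 1 then show ?thesis using xs_eq by simp
    next
      case 2
      then obtain a where "cs = [a]" by (cases cs) auto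
      then show ?thesis using xs_eq less.prems nl by auto
    next
      case 3
      then obtain a b where "cs = [a, b]" by (cases cs; cases "tl cs") auto
      then have "xs = [a, b, a]" using xs_eq less.prems(3) by simp
      then show ?thesis using less.prems(1) dd_anti[OF og, of a b \<phi> \<psi>] by simp
    next
      case 4
      let ?n = "length cs"
      have lxs: "length xs = Suc ?n" using xs_eq by simp
      have xsn: "\<And>i. i < ?n \<Longrightarrow> xs ! i = cs ! i" using xs_eq by (simp add: nth_append)
      have xsl: "xs ! ?n = cs ! 0"
      proof -
        have "xs ! ?n = l" using xs_eq by (simp add: nth_append)
        also have "l = hd xs" using less.prems(3) l_def by simp
        also have "hd xs = cs ! 0" using xs_eq 4 by (cases cs) auto
        finally show ?thesis .
      qed
      have nxt: "\<And>i. i < ?n \<Longrightarrow> cs ! ((i + 1) mod ?n) = xs ! Suc i"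
      proof -
        fix i assume i: "i < ?n"
        show "cs ! ((i + 1) mod ?n) = xs ! Suc i"
        proof (cases "Suc i < ?n")
          case True then show ?thesis using xsn by simp
        next
          case False then have "Suc i = ?n" using i by simp
          then show ?thesis using xsl by simp
        qed
      qed
      have adj: "\<forall>i<?n. ?A (cs ! i) (cs ! ((i + 1) mod ?n))"
      proof (intro allI impI)
        fix i assume i: "i < ?n"
        have "?A (xs ! i) (xs ! Suc i)" using successively_nth[OF less.prems(1)] i lxs by simp
        then show "?A (cs ! i) (cs ! ((i + 1) mod ?n))" using nxt[OF i] xsn[OF i] by simp
      qed
      have "set cs \<subseteq> V"
      proof
        fix v assume "v \<in> set cs"
        then obtain i where i: "i < ?n" "cs ! i = v" by (auto simp: in_set_conv_nth)
        then show "v \<in> V" using adj EV by auto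
      qed
      then have "is_cycle V E cs" unfolding is_cycle_def using 4 dist adj by auto
      then have eq: "cycle_value E p \<phi> cs - cycle_value E p \<psi> cs = 0" using cyc by simp
      have "cycle_value E p \<phi> cs - cycle_value E p \<psi> cs = (\<Sum>i<?n. ?d (cs ! i) (cs ! ((i + 1) mod ?n)))"
        unfolding cycle_value_def sum_subtractf[symmetric]
        by (rule sum.cong) (auto simp: Let_def dd_def)
      also have "\<dots> = (\<Sum>i<?n. ?d (xs ! i) (xs ! Suc i))"
        by (rule sum.cong) (use nxt xsn in auto)
      also have "\<dots> = ws ?d xs" using lxs by (simp add: ws_nth)
      finally show ?thesis using eq by simp
    qed
  next
    case False
    then obtain ys v zs us where cs_eq: "cs = ys @ [v] @ zs @ [v] @ us"
      using not_distinct_decomp by blast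
    have xs2: "xs = ys @ v # (zs @ v # (us @ [l]))" using xs_eq cs_eq by simp
    have s1: "ws ?d xs = ws ?d (ys @ [v]) + ws ?d (v # zs @ [v]) + ws ?d (v # us @ [l])"
    proof -
      have "ws ?d xs = ws ?d (ys @ [v]) + ws ?d ((v # zs) @ v # (us @ [l]))"
        unfolding xs2 by (subst ws_append) simp
      also have "ws ?d ((v # zs) @ v # (us @ [l])) = ws ?d ((v # zs) @ [v]) + ws ?d (v # us @ [l])"
        by (rule ws_append)
      finally show ?thesis by simp
    qed
    have s2: "ws ?d (ys @ v # (us @ [l])) = ws ?d (ys @ [v]) + ws ?d (v # us @ [l])"
      by (rule ws_append)
    have sx: "successively ?A (ys @ v # zs @ v # us @ [l])" using less.prems(1) xs2 by simp
    have "ws ?d (v # zs @ [v]) = 0"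
    proof (rule less.hyps)
      show "length (v # zs @ [v]) < length xs" using xs2 by simp
      show "successively ?A (v # zs @ [v])"
        using succ_split(1)[of ?A "v # zs" v "us @ [l]"] succ_split(2)[of ?A ys v "zs @ v # us @ [l]"] sx
        by simp
    qed simp_all
    moreover have "ws ?d (ys @ v # (us @ [l])) = 0"
    proof (rule less.hyps)
      show "length (ys @ v # (us @ [l])) < length xs" using xs2 by simp
      show "successively ?A (ys @ v # (us @ [l]))"
        using succ_glue[of ?A ys v "us @ [l]"] succ_split(1)[of ?A ys v "zs @ v # us @ [l]"]
          succ_split(2)[of ?A "ys @ v # zs" v "us @ [l]"] sx by simp
      show "hd (ys @ v # (us @ [l])) = last (ys @ v # (us @ [l]))"
        using less.prems(3) xs2 by (cases ys) auto
    qed simp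
    ultimately show ?thesis using s1 s2 by simp
  qed
qed


lemma walk_exists:
  assumes "(u, v) \<in> R\<^sup>*"
  shows "\<exists>xs. xs \<noteq> [] \<and> hd xs = u \<and> last xs = v \<and> successively (\<lambda>x y. (x, y) \<in> R) xs"
  using assms
proof (induction rule: rtrancl_induct)
  case base then show ?case by (intro exI[of _ "[u]"]) simp
next
  case (step y z)
  then obtain xs where xs: "xs \<noteq> []" "hd xs = u" "last xs = y" "successively (\<lambda>x y. (x, y) \<in> R) xs"
    by blast
  then show ?case using step(2)
    by (intro exI[of _ "xs @ [z]"]) (auto simp: successively_append_iff)
qed

lemma potential_exists:
  assumes og: "oriented_graph V E" and con: "connected_graph V E"
    and cyc: "\<forall>vs. is_cycle V E vs \<longrightarrow> cycle_value E p \<phi> vs = cycle_value E p \<psi> vs"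
  shows "\<exists>F. \<forall>u w. (u, w) \<in> E \<longrightarrow> \<phi> (u, w) = \<psi> (u, w) + F u - F w"
proof (cases "V = {}")
  case True
  then have "E = {}" using og unfolding oriented_graph_def by auto
  then show ?thesis by auto
next
  case False
  then obtain r where r: "r \<in> V" by auto
  let ?A = "\<lambda>x y. (x, y) \<in> E \<union> E\<inverse>"
  let ?d = "dd E \<phi> \<psi>"
  let ?W = "\<lambda>v xs. xs \<noteq> [] \<and> hd xs = r \<and> last xs = v \<and> successively ?A xs"
  define P where "P v = (SOME xs. ?W v xs)" for v
  have PW: "?W v (P v)" if "v \<in> V" for v
  proof -
    have "(r, v) \<in> (E \<union> E\<inverse>)\<^sup>*" using con r that unfolding connected_graph_def by blast
    from walk_exists[OF this] have "\<exists>xs. ?W v xs" by simp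
    then show ?thesis unfolding P_def by (rule someI_ex)
  qed
  have EV: "E \<subseteq> V \<times> V" using og unfolding oriented_graph_def by auto
  show ?thesis
  proof (intro exI[of _ "\<lambda>v. - ws ?d (P v)"] allI impI)
    fix u w assume e: "(u, w) \<in> E"
    then have uV: "u \<in> V" and wV: "w \<in> V" using EV by auto
    note pu = PW[OF uV] and pw = PW[OF wV]
    have "rev (P w) \<noteq> []" "hd (rev (P w)) = w" using pw by (simp_all add: hd_rev)
    then obtain rest where rw: "rev (P w) = w # rest" by (cases "rev (P w)") auto
    have pne: "P u \<noteq> []" and pl: "last (P u) = u" using pu by auto
    have pu_eq: "P u = butlast (P u) @ [u]"
      using append_butlast_last_id[OF pne] unfolding pl by simp
    define C where "C = P u @ rev (P w)"
    have sC: "successively ?A C"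
    proof -
      have "successively (\<lambda>x y. ?A y x) (P w)"
        using pw by (auto elim!: successively_mono)
      then have "successively ?A (rev (P w))" by simp
      moreover have "?A (last (P u)) (hd (rev (P w)))" using pl rw e by simp
      ultimately show ?thesis unfolding C_def using pu successively_append_iff by blast
    qed
    have "C \<noteq> []" using pu unfolding C_def by simp
    have "hd C = r" using pu unfolding C_def by simp
    moreover have "last C = r" using pw unfolding C_def by (simp add: last_rev)
    ultimately have "hd C = last C" by simp
    note this \<open>C \<noteq> []\<close>
    then have z: "ws ?d C = 0" using closed_walk_zero[OF og cyc sC] by blast
    have "ws ?d C = ws ?d (P u @ [w]) + ws ?d (w # rest)"
      unfolding C_def rw by (rule ws_append)
    also have "ws ?d (P u @ [w]) = ws ?d (P u) + ?d u w"
      using pne pl by (simp add: ws_snoc)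
    also have "ws ?d (w # rest) = - ws ?d (P w)"
      using ws_rev[of ?A ?d "P w", OF dd_anti[OF og]] pw rw by simp
    finally have "ws ?d (P u) + ?d u w - ws ?d (P w) = 0" using z by simp
    moreover have "?d u w = \<phi> (u, w) - \<psi> (u, w)" using e unfolding dd_def by simp
    ultimately show "\<phi> (u, w) = \<psi> (u, w) + - ws ?d (P u) - - ws ?d (P w)" by simp
  qed
qed


lemma step_pot:
  assumes og: "oriented_graph V E" and st: "cut_relabel_step V E p q \<phi> \<phi>'"
  shows "\<exists>g. \<forall>u w. (u, w) \<in> E \<longrightarrow> \<phi>' (u, w) = \<phi> (u, w) + g u - g w"
proof -
  have EV: "E \<subseteq> V \<times> V" using og unfolding oriented_graph_def by auto
  from st obtain X \<alpha> where
    ph: "\<forall>e\<in>E. \<phi>' e = (if e \<in> out_cut V E X then \<phi> e - \<alpha>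
                         else if e \<in> in_cut V E X then \<phi> e + \<alpha> else \<phi> e)"
    unfolding cut_relabel_step_def by blast
  show ?thesis
  proof (intro exI[of _ "\<lambda>v. if v \<in> X then - \<alpha> else 0"] allI impI)
    fix u w assume e: "(u, w) \<in> E"
    then have "u \<in> V" "w \<in> V" using EV by auto
    then show "\<phi>' (u, w) = \<phi> (u, w) + (if u \<in> X then - \<alpha> else 0) - (if w \<in> X then - \<alpha> else 0)"
      using ph e unfolding out_cut_def in_cut_def by auto
  qed
qed

lemma steps_cv:
  assumes og: "oriented_graph V E"
    and adj: "\<forall>i<length vs. (vs!i, vs!((i+1) mod length vs)) \<in> E \<union> E\<inverse>"
  shows "(cut_relabel_step V E p q)\<^sup>*\<^sup>* \<phi> \<chi> \<Longrightarrow> cycle_value E p \<chi> vs = cycle_value E p \<phi> vs"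
proof (induction rule: rtranclp_induct)
  case (step y z)
  obtain g where "\<forall>u w. (u, w) \<in> E \<longrightarrow> z (u, w) = y (u, w) + g u - g w"
    using step_pot[OF og step(2)] by blast
  then have "cycle_value E p z vs = cycle_value E p y vs" by (rule cv_pot[OF adj])
  then show ?case using step(3) by simp
qed simp

lemma descent:
  assumes og: "oriented_graph V E" and p2: "p \<ge> 2" and q0: "q > 0"
    and pqpsi: "pq_labelling V E p q \<psi>"
  shows "\<forall>v\<in>V. c \<le> F v \<Longrightarrow> pq_labelling V E p q \<phi> \<Longrightarrow>
    \<forall>u w. (u, w) \<in> E \<longrightarrow> \<phi> (u, w) = \<psi> (u, w) + F u - F w \<Longrightarrow>
    \<exists>\<chi>. (cut_relabel_step V E p q)\<^sup>*\<^sup>* \<phi> \<chi> \<and> (\<forall>e\<in>E. \<chi> e = \<psi> e)"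
proof (induction "\<Sum>v\<in>V. nat (F v - c)" arbitrary: F \<phi> rule: less_induct)
  case less
  have EV: "E \<subseteq> V \<times> V" and fin: "finite V" using og unfolding oriented_graph_def by auto
  show ?case
  proof (cases "\<forall>u\<in>V. \<forall>w\<in>V. F u = F w")
    case True
    have "\<forall>e\<in>E. \<phi> e = \<psi> e"
    proof
      fix e assume e: "e \<in> E"
      obtain u w where uw: "e = (u, w)" by (cases e)
      then have "u \<in> V" "w \<in> V" using e EV by auto
      then have "F u = F w" using True by blast
      then show "\<phi> e = \<psi> e" using less.prems(3) e uw by simp
    qed
    then show ?thesis by blast
  next
    case False
    then obtain a b where ab: "a \<in> V" "b \<in> V" "F a \<noteq> F b" by blast
    define M where "M = Max (F ` V)"
    have Mge: "\<And>v. v \<in> V \<Longrightarrow> F v \<le> M" unfolding M_def using fin by simp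
    have "M \<in> F ` V" unfolding M_def using fin ab by (intro Max_in) auto
    then obtain m where m: "m \<in> V" "F m = M" by auto
    obtain b' where b': "b' \<in> V" "F b' < M" using ab Mge
      by (metis antisym_conv2)
    define X where "X = {v \<in> V. F v = M}"
    have Xne: "X \<noteq> {}" using m unfolding X_def by auto
    have XV: "X \<subset> V" using b' unfolding X_def by auto
    define \<phi>' where "\<phi>' e = (if e \<in> out_cut V E X then \<phi> e - 1
                         else if e \<in> in_cut V E X then \<phi> e + 1 else \<phi> e)" for e
    define F' where "F' v = (if v \<in> X then F v - 1 else F v)" for v
    have rel: "\<forall>u w. (u, w) \<in> E \<longrightarrow> \<phi>' (u, w) = \<psi> (u, w) + F' u - F' w"
    proof (intro allI impI)
      fix u w assume e: "(u, w) \<in> E"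
      then have "u \<in> V" "w \<in> V" using EV by auto
      then show "\<phi>' (u, w) = \<psi> (u, w) + F' u - F' w"
        using less.prems(3) e unfolding \<phi>'_def F'_def out_cut_def in_cut_def by auto
    qed
    have psib: "\<forall>e\<in>E. q \<le> \<psi> e \<and> \<psi> e \<le> p - q" using pqpsi unfolding pq_labelling_def by auto
    have phib: "\<forall>e\<in>E. q \<le> \<phi> e \<and> \<phi> e \<le> p - q" using less.prems(2) unfolding pq_labelling_def by auto
    have outb: "\<forall>e\<in>out_cut V E X. \<phi> e \<ge> q + 1"
    proof
      fix e assume e: "e \<in> out_cut V E X"
      then obtain u w where uw: "e = (u, w)" "(u, w) \<in> E" "u \<in> X" "w \<in> V - X"
        unfolding out_cut_def by auto
      then have "F u = M" "F w < M" unfolding X_def using Mge by force+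
      then show "\<phi> e \<ge> q + 1" using uw less.prems(3) psib by force
    qed
    have inb: "\<forall>e\<in>in_cut V E X. \<phi> e \<le> p - q - 1"
    proof
      fix e assume e: "e \<in> in_cut V E X"
      then obtain u w where uw: "e = (u, w)" "(u, w) \<in> E" "w \<in> X" "u \<in> V - X"
        unfolding in_cut_def by auto
      then have "F w = M" "F u < M" unfolding X_def using Mge by force+
      then show "\<phi> e \<le> p - q - 1" using uw less.prems(3) psib by force
    qed
    have step: "cut_relabel_step V E p q \<phi> \<phi>'"
      unfolding cut_relabel_step_def
      using less.prems(2) Xne XV p2 outb inb
      by (intro conjI exI[of _ X] exI[of _ 1]) (auto simp: \<phi>'_def)
    have b1: "\<forall>e\<in>E. q \<le> \<phi>' e \<and> \<phi>' e \<le> p - q"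
      using phib outb inb unfolding \<phi>'_def by auto
    have pq': "pq_labelling V E p q \<phi>'"
      unfolding pq_labelling_def
    proof (intro conjI allI impI ballI)
      fix vs assume "is_cycle V E vs"
      then have adj: "\<forall>i<length vs. (vs!i, vs!((i+1) mod length vs)) \<in> E \<union> E\<inverse>"
        unfolding is_cycle_def by auto
      have "cycle_value E p \<phi>' vs = cycle_value E p \<psi> vs" by (rule cv_pot[OF adj rel])
      then show "cycle_value E p \<phi>' vs mod p = 0"
        using pqpsi \<open>is_cycle V E vs\<close> unfolding pq_labelling_def by simp
    qed (use b1 q0 in force)+
    have cF': "\<forall>v\<in>V. c \<le> F' v"
    proof
      fix v assume v: "v \<in> V"
      show "c \<le> F' v"
      proof (cases "v \<in> X")
        case True
        then have "F v = M" unfolding X_def by simp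
        then show ?thesis using b' less.prems(1) True unfolding F'_def by force
      qed (use v less.prems(1) F'_def in auto)
    qed
    have lt: "(\<Sum>v\<in>V. nat (F' v - c)) < (\<Sum>v\<in>V. nat (F v - c))"
    proof (rule sum_strict_mono_ex1[OF fin])
      show "\<forall>x\<in>V. nat (F' x - c) \<le> nat (F x - c)" unfolding F'_def by auto
      have "F' m = F m - 1" "c \<le> F' m" using m cF' unfolding F'_def X_def by auto
      then show "\<exists>a\<in>V. nat (F' a - c) < nat (F a - c)" using m by (intro bexI[of _ m]) auto
    qed
    obtain \<chi> where "(cut_relabel_step V E p q)\<^sup>*\<^sup>* \<phi>' \<chi>" "\<forall>e\<in>E. \<chi> e = \<psi> e"
      using less.hyps[OF lt cF' pq' rel] by blast
    then show ?thesis using step converse_rtranclp_into_rtranclp by metis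
  qed
qed

theorem theorem2p2:
  fixes V :: "'v set" and E :: "('v \<times> 'v) set" and p q :: int
    and \<phi> \<psi> :: "'v \<times> 'v \<Rightarrow> int"
  assumes "p > 0" and "q > 0" and "real_of_int p / real_of_int q \<ge> 2"
    and "oriented_graph V E" and "connected_graph V E"
    and "pq_labelling V E p q \<phi>" and "pq_labelling V E p q \<psi>"
  shows "cut_reachable V E p q \<phi> \<psi> \<longleftrightarrow>
         (\<forall>vs. is_cycle V E vs \<longrightarrow> cycle_value E p \<phi> vs = cycle_value E p \<psi> vs)"
proof
  assume "cut_reachable V E p q \<phi> \<psi>"
  then obtain \<chi> where ch: "(cut_relabel_step V E p q)\<^sup>*\<^sup>* \<phi> \<chi>" "\<forall>e\<in>E. \<chi> e = \<psi> e"
    unfolding cut_reachable_def by blast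
  show "\<forall>vs. is_cycle V E vs \<longrightarrow> cycle_value E p \<phi> vs = cycle_value E p \<psi> vs"
  proof (intro allI impI)
    fix vs assume "is_cycle V E vs"
    then have adj: "\<forall>i<length vs. (vs!i, vs!((i+1) mod length vs)) \<in> E \<union> E\<inverse>"
      unfolding is_cycle_def by auto
    have "cycle_value E p \<chi> vs = cycle_value E p \<phi> vs" by (rule steps_cv[OF assms(4) adj ch(1)])
    moreover have "cycle_value E p \<chi> vs = cycle_value E p \<psi> vs"
      by (rule cv_pot[OF adj, where g = "\<lambda>_. 0"]) (use ch(2) in auto)
    ultimately show "cycle_value E p \<phi> vs = cycle_value E p \<psi> vs" by simp
  qed
next
  assume cyc: "\<forall>vs. is_cycle V E vs \<longrightarrow> cycle_value E p \<phi> vs = cycle_value E p \<psi> vs"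
  obtain F where F: "\<forall>u w. (u, w) \<in> E \<longrightarrow> \<phi> (u, w) = \<psi> (u, w) + F u - F w"
    using potential_exists[OF assms(4,5) cyc] by blast
  have "real_of_int p \<ge> 2 * real_of_int q" using assms(2,3) by (simp add: le_divide_eq)
  then have p2: "p \<ge> 2" using assms(2) by linarith
  have fin: "finite V" using assms(4) unfolding oriented_graph_def by auto
  define c where "c = Min (insert 0 (F ` V))"
  have "\<forall>v\<in>V. c \<le> F v" unfolding c_def using fin by auto
  then show "cut_reachable V E p q \<phi> \<psi>"
    unfolding cut_reachable_def using descent[OF assms(4) p2 assms(2,7) _ assms(6) F] by blast
qed

end
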